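(* Let $f:\mathbb R^d\to[0,\infty)$ be $C^2$ with $f^*:=f(x^* )=\sup_xf(x)<\infty$ for some $x^*$, and suppose $$K_f:=\frac12\sup_{x\in\mathbb R^d}\sum_{i,j=1}^d|\partial^2_{ij}f(x)|<\infty,\qquad\lambda:=\int_{\mathbb R^d}f(x)dx\in(0,\infty).$$ Let $X_1,\dots,X_N$ be i.i.d. with law $f(x)dx/\lambda$. Then for any $\beta\in(0,4/d)$ and $N>(f^* )^{2/\beta}$, $$\mathbb E\Big|\sup_{n=1,\dots,N}f(X_n)-f^*\Big|^2\le N^{-\beta}+(f^* )^2\exp\Big\{-(f^*-N^{-\beta/2})K_f^{-d/2}N^{1-d\beta/4}/\lambda\Big\}.$$ In particular $\lim_{N\to\infty}\mathbb E|\sup_{n\le N}f(X_n)-f^*|^2=0$. *)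

theory Defs
  imports "HOL-Probability.Probability"
begin

definition partial :: "'d::finite \<Rightarrow> (real^'d \<Rightarrow> real) \<Rightarrow> real^'d \<Rightarrow> real" where
  "partial i g x = deriv (\<lambda>t. g (x + t *\<^sub>R axis i 1)) 0"

definition C2 :: "(real^'d::finite \<Rightarrow> real) \<Rightarrow> bool" where
  "C2 g \<longleftrightarrow>
     (\<forall>i x. (\<lambda>t. g (x + t *\<^sub>R axis i 1)) differentiable (at 0)) \<and>
     (\<forall>i j x. (\<lambda>t. partial i g (x + t *\<^sub>R axis j 1)) differentiable (at 0)) \<and>
     continuous_on UNIV g \<and>
     (\<forall>i. continuous_on UNIV (partial i g)) \<and>
     (\<forall>i j. continuous_on UNIV (partial j (partial i g)))"

definition hess_abs_sum :: "(real^'d::finite \<Rightarrow> real) \<Rightarrow> real^'d \<Rightarrow> real" where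
  "hess_abs_sum g x = (\<Sum>i\<in>UNIV. \<Sum>j\<in>UNIV. \<bar>partial i (partial j g) x\<bar>)"

definition Kconst :: "(real^'d::finite \<Rightarrow> real) \<Rightarrow> real" where
  "Kconst g = (1/2) * (SUP x. hess_abs_sum g x)"

end

theory Submission
  imports Defs
begin


lemma mvt_bound1:
  fixes g g' :: "real \<Rightarrow> real"
  assumes d: "\<And>t. (g has_real_derivative g' t) (at t)"
    and b: "\<And>t. \<bar>t\<bar> \<le> \<bar>a\<bar> \<Longrightarrow> \<bar>g' t - c\<bar> \<le> e"
  shows "\<bar>g a - g 0 - a * c\<bar> \<le> e * \<bar>a\<bar>"
proof (cases "0 \<le> a")
  case True
  have "\<exists>x\<in>{0..a}. g a - g 0 = (*) (g' x) (a - 0)"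
    by (rule mvt_very_simple[OF True]) (auto intro: has_derivative_at_withinI d[unfolded has_field_derivative_def])
  then obtain x where x: "x \<in> {0..a}" "g a - g 0 = g' x * a" by auto
  have "\<bar>g' x - c\<bar> \<le> e" using x True by (intro b) auto
  then have "\<bar>(g' x - c) * a\<bar> \<le> e * \<bar>a\<bar>" by (simp add: abs_mult mult_right_mono)
  then show ?thesis using x by (simp add: algebra_simps)
next
  case False
  have "\<exists>x\<in>{a..0}. g 0 - g a = (*) (g' x) (0 - a)"
    using False by (intro mvt_very_simple) (auto intro: has_derivative_at_withinI d[unfolded has_field_derivative_def])
  then obtain x where x: "x \<in> {a..0}" "g 0 - g a = g' x * (- a)" by auto
  have "\<bar>g' x - c\<bar> \<le> e" using x False by (intro b) auto
  then have "\<bar>(g' x - c) * a\<bar> \<le> e * \<bar>a\<bar>" by (simp add: abs_mult mult_right_mono)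
  then show ?thesis using x by (simp add: algebra_simps)
qed

lemma partial_has_deriv:
  fixes F :: "real^'d \<Rightarrow> real"
  assumes diff: "\<And>x. (\<lambda>t. F (x + t *\<^sub>R axis i 1)) differentiable (at 0)"
  shows "((\<lambda>t. F (y + t *\<^sub>R axis i 1)) has_real_derivative partial i F (y + s *\<^sub>R axis i 1)) (at s)"
proof -
  define z where "z = y + s *\<^sub>R axis i (1::real)"
  define G where "G = (\<lambda>u. F (z + u *\<^sub>R axis i 1))"
  have "(G has_real_derivative partial i F z) (at 0)"
    unfolding G_def partial_def using diff[of z] DERIV_deriv_iff_real_differentiable by blast
  then have "(G has_real_derivative partial i F z) (at (s + - s))" by simp
  then have "((\<lambda>u. G (u + - s)) has_real_derivative partial i F z) (at s)"
    by (subst (asm) DERIV_shift)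
  moreover have "(\<lambda>u. G (u + - s)) = (\<lambda>t. F (y + t *\<^sub>R axis i 1))"
    by (auto simp: G_def z_def algebra_simps)
  ultimately show ?thesis by (simp add: z_def)
qed


lemma sum_axis_comp:
  fixes h :: "real^'d"
  shows "(\<Sum>k\<in>S. h$k *\<^sub>R axis k (1::real)) $ j = (if j \<in> S then h$j else 0)"
proof -
  have "(\<Sum>k\<in>S. h$k *\<^sub>R axis k (1::real)) $ j = (\<Sum>k\<in>S. h$k * (if j = k then 1 else 0))"
    by (subst sum_eq) (simp add: axis_def)
  also have "\<dots> = (\<Sum>k\<in>S. (if j = k then h$j else 0))"
    by (intro sum.cong) auto
  also have "\<dots> = (if j \<in> S then h$j else 0)"
    by (simp add: sum.delta' cong: if_cong)
  finally show ?thesis .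
qed

lemma frechet_aux:
  fixes F :: "real^'d \<Rightarrow> real"
  assumes diff: "\<And>i x. (\<lambda>t. F (x + t *\<^sub>R axis i 1)) differentiable (at 0)"
    and close: "\<And>y i. norm (y - x) < \<delta> \<Longrightarrow> \<bar>partial i F y - partial i F x\<bar> \<le> e"
    and h: "norm h < \<delta>"
  shows "\<bar>F (x + (\<Sum>i\<in>S. h$i *\<^sub>R axis i 1)) - F x - (\<Sum>i\<in>S. h$i * partial i F x)\<bar>
          \<le> e * (\<Sum>i\<in>S. \<bar>h$i\<bar>)"
proof (induction S rule: infinite_finite_induct)
  case (infinite A) then show ?case by simp
next
  case empty then show ?case by simp
next
  case (insert i S)
  define y where "y = x + (\<Sum>i\<in>S. h$i *\<^sub>R axis i (1::real))"
  define g where "g = (\<lambda>t. F (y + t *\<^sub>R axis i 1))"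
  have gd: "\<And>t. (g has_real_derivative partial i F (y + t *\<^sub>R axis i 1)) (at t)"
    unfolding g_def by (rule partial_has_deriv[OF diff])
  have gb: "\<bar>partial i F (y + t *\<^sub>R axis i 1) - partial i F x\<bar> \<le> e" if t: "\<bar>t\<bar> \<le> \<bar>h$i\<bar>" for t
  proof (rule close)
    have "norm (y + t *\<^sub>R axis i 1 - x) \<le> norm h"
    proof (rule norm_le_componentwise_cart)
      fix j
      have "(y + t *\<^sub>R axis i 1 - x) $ j = (if j \<in> S then h$j else 0) + (if j = i then t else 0)"
      proof -
        have "y + t *\<^sub>R axis i 1 - x = (\<Sum>k\<in>S. h$k *\<^sub>R axis k (1::real)) + t *\<^sub>R axis i 1"
          by (simp add: y_def)
        then have "(y + t *\<^sub>R axis i 1 - x) $ j = (\<Sum>k\<in>S. h$k *\<^sub>R axis k (1::real)) $ j + t * (axis i 1 $ j)"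
          by (simp only: vector_add_component vector_scaleR_component real_scaleR_def)
        then show ?thesis by (simp only: sum_axis_comp) (simp add: axis_def)
      qed
      then show "norm ((y + t *\<^sub>R axis i 1 - x) $ j) \<le> norm (h $ j)"
        using t insert(2) by auto
    qed
    then show "norm (y + t *\<^sub>R axis i 1 - x) < \<delta>" using h by simp
  qed
  have 1: "\<bar>g (h$i) - g 0 - h$i * partial i F x\<bar> \<le> e * \<bar>h$i\<bar>"
    by (rule mvt_bound1[OF gd gb])
  have eq: "x + (\<Sum>i\<in>insert i S. h$i *\<^sub>R axis i 1) = y + h$i *\<^sub>R axis i 1"
    using insert by (simp add: y_def algebra_simps)
  have IH: "\<bar>F y - F x - (\<Sum>i\<in>S. h$i * partial i F x)\<bar> \<le> e * (\<Sum>i\<in>S. \<bar>h$i\<bar>)"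
    using insert.IH by (simp add: y_def)
  show ?case using 1 IH insert(1,2) unfolding eq by (simp add: g_def algebra_simps)
qed

lemma frechet_partials:
  fixes F :: "real^'d \<Rightarrow> real"
  assumes diff: "\<And>i x. (\<lambda>t. F (x + t *\<^sub>R axis i 1)) differentiable (at 0)"
    and cont: "\<And>i. continuous_on UNIV (partial i F)"
  shows "(F has_derivative (\<lambda>v. \<Sum>i\<in>UNIV. v$i * partial i F x)) (at x)"
  unfolding has_derivative_at_alt
proof (intro conjI allI impI)
  show "bounded_linear (\<lambda>v. \<Sum>i\<in>UNIV. v$i * partial i F x)"
    by (intro bounded_linear_sum) (auto intro: bounded_linear_compose[OF bounded_linear_mult_left bounded_linear_vec_nth])
  fix e :: real assume e: "e > 0"
  define e' where "e' = e / real CARD('d)"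
  have e': "e' > 0" using e by (simp add: e'_def)
  have "\<forall>\<^sub>F y in at x. dist (partial i F y) (partial i F x) < e'" for i
    using cont[of i] e' by (intro tendstoD) (auto simp: continuous_on_eq_continuous_at isCont_def)
  then have "\<forall>\<^sub>F y in at x. \<forall>i. dist (partial i F y) (partial i F x) < e'"
    by (rule eventually_all_finite)
  then obtain d where d: "d > 0" "\<And>y. y \<noteq> x \<Longrightarrow> dist y x < d \<Longrightarrow> \<forall>i. dist (partial i F y) (partial i F x) < e'"
    unfolding eventually_at by blast
  have close: "\<bar>partial i F y - partial i F x\<bar> \<le> e'" if "norm (y - x) < d" for y i
    using d(2)[of y] that e' by (cases "y = x") (auto simp: dist_norm dest!: spec[of _ i])
  show "\<exists>d>0. \<forall>y. norm (y - x) < d \<longrightarrow>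
          norm (F y - F x - (\<Sum>i\<in>UNIV. (y - x) $ i * partial i F x)) \<le> e * norm (y - x)"
  proof (intro exI[of _ d] conjI allI impI d)
    fix y assume y: "norm (y - x) < d"
    have "(\<Sum>i\<in>UNIV. (y - x)$i *\<^sub>R axis i (1::real)) = y - x"
      using basis_expansion[of "y - x"] by (simp add: scalar_mult_eq_scaleR)
    then have "\<bar>F y - F x - (\<Sum>i\<in>UNIV. (y - x)$i * partial i F x)\<bar> \<le> e' * (\<Sum>i\<in>UNIV. \<bar>(y - x)$i\<bar>)"
      using frechet_aux[OF diff close y, of UNIV] by simp
    also have "\<dots> \<le> e' * (\<Sum>i\<in>(UNIV::'d set). norm (y - x))"
      using e' component_le_norm_cart[of "y - x"] by (intro mult_left_mono sum_mono) (auto simp: component_le_norm_cart)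
    also have "\<dots> = e * norm (y - x)" by (simp add: e'_def)
    finally show "norm (F y - F x - (\<Sum>i\<in>UNIV. (y - x) $ i * partial i F x)) \<le> e * norm (y - x)"
      by simp
  qed
qed


lemma line_deriv:
  fixes F :: "real^'d \<Rightarrow> real"
  assumes D: "\<And>y. (F has_derivative (\<lambda>v. \<Sum>i\<in>UNIV. v$i * D i y)) (at y)"
  shows "((\<lambda>t. F (a + t *\<^sub>R h)) has_real_derivative (\<Sum>i\<in>UNIV. h$i * D i (a + t *\<^sub>R h))) (at t)"
proof -
  have l: "((\<lambda>t. a + t *\<^sub>R h) has_derivative (\<lambda>s. s *\<^sub>R h)) (at t)"
    by (auto intro!: derivative_eq_intros)
  have "(F \<circ> (\<lambda>t. a + t *\<^sub>R h) has_derivative (\<lambda>v. \<Sum>i\<in>UNIV. v$i * D i (a + t *\<^sub>R h)) \<circ> (\<lambda>s. s *\<^sub>R h)) (at t)"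
    by (rule diff_chain_at[OF l D])
  moreover have "(\<lambda>v. \<Sum>i\<in>UNIV. v$i * D i (a + t *\<^sub>R h)) \<circ> (\<lambda>s. s *\<^sub>R h) = (*) (\<Sum>i\<in>UNIV. h$i * D i (a + t *\<^sub>R h))"
    by (auto simp: fun_eq_iff sum_distrib_left algebra_simps)
  ultimately show ?thesis by (simp add: has_field_derivative_def o_def)
qed

lemma taylor_lower:
  fixes f :: "real^'d \<Rightarrow> real"
  assumes C2: "C2 f"
    and max: "\<And>x. f x \<le> f xstar"
    and Kfin: "bdd_above (range (hess_abs_sum f))"
    and hr: "\<And>i. \<bar>h$i\<bar> \<le> r"
  shows "f (xstar + h) \<ge> f xstar - Kconst f * r\<^sup>2"
proof -
  from C2 have diff1: "\<And>i x. (\<lambda>t. f (x + t *\<^sub>R axis i 1)) differentiable (at 0)"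
    and diff2: "\<And>i j x. (\<lambda>t. partial i f (x + t *\<^sub>R axis j 1)) differentiable (at 0)"
    and cont1: "\<And>i. continuous_on UNIV (partial i f)"
    and cont2: "\<And>i j. continuous_on UNIV (partial j (partial i f))"
    unfolding C2_def by auto
  have Df: "\<And>y. (f has_derivative (\<lambda>v. \<Sum>i\<in>UNIV. v$i * partial i f y)) (at y)"
    by (rule frechet_partials[OF diff1 cont1])
  have Dp: "\<And>i y. (partial i f has_derivative (\<lambda>v. \<Sum>j\<in>UNIV. v$j * partial j (partial i f) y)) (at y)"
    by (rule frechet_partials[OF diff2 cont2])
  define g1 where "g1 = (\<lambda>t. \<Sum>i\<in>UNIV. h$i * partial i f (xstar + t *\<^sub>R h))"
  define g2 where "g2 = (\<lambda>t. \<Sum>i\<in>UNIV. h$i * (\<Sum>j\<in>UNIV. h$j * partial j (partial i f) (xstar + t *\<^sub>R h)))"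
  define g where "g = (\<lambda>t. f (xstar + t *\<^sub>R h))"
  have dg: "(g has_real_derivative g1 t) (at t)" for t
    unfolding g_def g1_def by (rule line_deriv[OF Df])
  have dg1: "(g1 has_real_derivative g2 t) (at t)" for t
    unfolding g1_def g2_def
    by (intro DERIV_sum DERIV_cmult line_deriv[OF Dp])
  have p0: "partial i f xstar = 0" for i
  proof -
    have "((\<lambda>s. f (xstar + s *\<^sub>R axis i 1)) has_real_derivative partial i f (xstar + 0 *\<^sub>R axis i 1)) (at 0)"
      by (rule partial_has_deriv[OF diff1])
    then have "((\<lambda>s. f (xstar + s *\<^sub>R axis i 1)) has_real_derivative partial i f xstar) (at 0)" by simp
    then show ?thesis
      by (rule DERIV_local_max[where d=1]) (auto intro: max)
  qed
  have g10: "g1 0 = 0" by (simp add: g1_def p0)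
  define diff where "diff = (\<lambda>m::nat. if m = 0 then g else if m = 1 then g1 else g2)"
  have "\<exists>t::real. 0 < t \<and> t < 1 \<and>
      g 1 = sum (\<lambda>m. (diff m 0 / fact m) * 1 ^ m) {..<2} + (diff 2 t / fact 2) * 1 ^ 2"
    by (rule Maclaurin) (auto simp: diff_def dg dg1 less_2_cases_iff)
  then obtain t where t: "g 1 = g 0 + g1 0 + g2 t / 2"
    by (auto simp: diff_def eval_nat_numeral)
  define y where "y = xstar + t *\<^sub>R h"
  have "\<bar>g2 t\<bar> \<le> (\<Sum>i\<in>UNIV. \<Sum>j\<in>UNIV. \<bar>h$i\<bar> * (\<bar>h$j\<bar> * \<bar>partial j (partial i f) y\<bar>))"
    unfolding g2_def y_def[symmetric]
    by (rule order_trans[OF sum_abs]) (auto intro!: sum_mono order_trans[OF sum_abs] simp: abs_mult sum_distrib_left)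
  also have "\<dots> \<le> (\<Sum>i\<in>UNIV. \<Sum>j\<in>UNIV. r * (r * \<bar>partial j (partial i f) y\<bar>))"
    using hr by (intro sum_mono mult_mono) (auto intro: order_trans[OF abs_ge_zero hr])
  also have "\<dots> = r\<^sup>2 * hess_abs_sum f y"
    unfolding hess_abs_sum_def
    by (subst sum.swap) (simp add: sum_distrib_left power2_eq_square algebra_simps)
  also have "\<dots> \<le> r\<^sup>2 * (2 * Kconst f)"
    unfolding Kconst_def using Kfin by (intro mult_left_mono) (auto intro: cSUP_upper)
  finally have "\<bar>g2 t\<bar> \<le> r\<^sup>2 * (2 * Kconst f)" .
  then have "- (r\<^sup>2 * (2 * Kconst f)) \<le> g2 t" by (simp add: abs_le_iff)
  then show ?thesis using t g10 by (simp add: g_def algebra_simps)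
qed


lemma (in prob_space) max_bound:
  fixes X :: "nat \<Rightarrow> 'a \<Rightarrow> real^'d" and f :: "real^'d \<Rightarrow> real"
  assumes indep: "indep_vars (\<lambda>_. borel) X {1..N}"
    and N: "N \<ge> 1"
    and fm: "f \<in> borel_measurable borel"
    and nonneg: "\<And>x. f x \<ge> 0" and max: "\<And>x. f x \<le> c"
    and eps: "\<epsilon> \<ge> 0"
    and p: "\<And>n. n\<in>{1..N} \<Longrightarrow> p \<le> prob {\<omega>\<in>space M. c - \<epsilon> \<le> f (X n \<omega>)}"
  shows "(\<integral>\<omega>. \<bar>Max ((\<lambda>n. f (X n \<omega>)) ` {1..N}) - c\<bar>\<^sup>2 \<partial>M) \<le> \<epsilon>\<^sup>2 + c\<^sup>2 * (1 - p) ^ N"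
proof -
  have rv: "\<And>n. n \<in> {1..N} \<Longrightarrow> X n \<in> borel_measurable M"
    using indep unfolding indep_vars_def2 by auto
  have isets: "indep_sets (\<lambda>i. {X i -` A \<inter> space M | A. A \<in> sets borel}) {1..N}"
    using indep unfolding indep_vars_def2 by auto
  define B where "B = {x. f x < c - \<epsilon>}"
  have Bm: "B \<in> sets borel" unfolding B_def using fm by measurable
  define bad where "bad = (\<Inter>n\<in>{1..N}. X n -` B \<inter> space M)"
  have good_ev: "{\<omega>\<in>space M. c - \<epsilon> \<le> f (X n \<omega>)} \<in> events" if "n \<in> {1..N}" for n
    using rv[OF that] fm by measurable
  have Bn: "X n -` B \<inter> space M = space M - {\<omega>\<in>space M. c - \<epsilon> \<le> f (X n \<omega>)}" for n
    by (auto simp: B_def)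
  have pbad: "prob bad = (\<Prod>n\<in>{1..N}. prob (X n -` B \<inter> space M))"
    unfolding bad_def using N Bm by (intro indep_setsD[OF isets]) auto
  also have "\<dots> \<le> (\<Prod>n\<in>{1..N}. 1 - p)"
  proof (intro prod_mono conjI)
    fix n assume n: "n \<in> {1..N}"
    show "0 \<le> prob (X n -` B \<inter> space M)" by simp
    show "prob (X n -` B \<inter> space M) \<le> 1 - p"
      unfolding Bn using prob_compl[OF good_ev[OF n]] p[OF n] by simp
  qed
  also have "\<dots> = (1 - p) ^ N" by simp
  finally have pbad': "prob bad \<le> (1 - p) ^ N" .
  have badm: "bad \<in> events"
    unfolding bad_def using N Bm rv by (intro sets.finite_INT) (auto intro: measurable_sets)
  define m where "m = (\<lambda>\<omega>. Max ((\<lambda>n. f (X n \<omega>)) ` {1..N}))"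
  have mm: "m \<in> borel_measurable M"
    unfolding m_def by (rule borel_measurable_Max) (auto intro: measurable_compose[OF rv fm])
  have mb: "0 \<le> m \<omega> \<and> m \<omega> \<le> c" for \<omega>
  proof -
    have "m \<omega> \<in> (\<lambda>n. f (X n \<omega>)) ` {1..N}" unfolding m_def using N by (intro Max_in) auto
    then show ?thesis using nonneg max by auto
  qed
  have Zm: "(\<lambda>\<omega>. \<bar>m \<omega> - c\<bar>\<^sup>2) \<in> borel_measurable M" using mm by measurable
  have Zi: "integrable M (\<lambda>\<omega>. \<bar>m \<omega> - c\<bar>\<^sup>2)"
  proof (rule integrable_const_bound[where B="c\<^sup>2"])
    show "AE x in M. norm (\<bar>m x - c\<bar>\<^sup>2) \<le> c\<^sup>2"
    proof (intro AE_I2)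
      fix x
      have "0 \<le> c - m x" "c - m x \<le> c" using mb[of x] by auto
      then have "(c - m x)\<^sup>2 \<le> c\<^sup>2" by (intro power_mono) auto
      then show "norm (\<bar>m x - c\<bar>\<^sup>2) \<le> c\<^sup>2" by (simp add: power2_commute)
    qed
  qed (rule Zm)
  have pw: "\<bar>m \<omega> - c\<bar>\<^sup>2 \<le> \<epsilon>\<^sup>2 + c\<^sup>2 * indicator bad \<omega>" if \<omega>: "\<omega> \<in> space M" for \<omega>
  proof (cases "\<omega> \<in> bad")
    case True
    have "0 \<le> c - m \<omega>" "c - m \<omega> \<le> c" using mb[of \<omega>] by auto
    then have "(c - m \<omega>)\<^sup>2 \<le> c\<^sup>2" by (intro power_mono) auto
    then show ?thesis using True by (simp add: power2_commute add_increasing)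
  next
    case False
    then obtain n where n: "n \<in> {1..N}" "c - \<epsilon> \<le> f (X n \<omega>)"
      using \<omega> N by (auto simp: bad_def B_def not_less)
    have "f (X n \<omega>) \<le> m \<omega>" unfolding m_def using n by (intro Max_ge) auto
    then have "0 \<le> c - m \<omega>" "c - m \<omega> \<le> \<epsilon>" using mb[of \<omega>] n by auto
    then have "(c - m \<omega>)\<^sup>2 \<le> \<epsilon>\<^sup>2" by (intro power_mono) auto
    then show ?thesis using False by (simp add: power2_commute)
  qed
  have "(\<integral>\<omega>. \<bar>m \<omega> - c\<bar>\<^sup>2 \<partial>M) \<le> (\<integral>\<omega>. \<epsilon>\<^sup>2 + c\<^sup>2 * indicator bad \<omega> \<partial>M)"
    using badm by (intro integral_mono Zi pw Bochner_Integration.integrable_add integrable_mult_right integrable_real_indicator) (auto simp: less_top[symmetric])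
  also have "\<dots> = \<epsilon>\<^sup>2 + c\<^sup>2 * prob bad"
    using badm by (subst Bochner_Integration.integral_add)
      (auto simp: less_top[symmetric] prob_space Int_absorb2 sets.sets_into_space intro!: integrable_mult_right integrable_real_indicator)
  also have "\<dots> \<le> \<epsilon>\<^sup>2 + c\<^sup>2 * (1 - p) ^ N"
    using pbad' by (intro add_left_mono mult_left_mono) auto
  finally show ?thesis by (simp add: m_def)
qed


lemma cube_prob:
  fixes X :: "'a \<Rightarrow> real^'d" and f :: "real^'d \<Rightarrow> real"
  assumes P: "prob_space M"
    and dist: "distributed M lborel X (\<lambda>x. ennreal (f x / lam))"
    and lam: "lam > 0" and r: "r \<ge> 0" and a: "a \<ge> 0"
    and cube: "\<And>h. (\<And>i. \<bar>h$i\<bar> \<le> r) \<Longrightarrow> a \<le> f (xs + h)"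
    and fm: "f \<in> borel_measurable borel"
  shows "a * (2*r)^CARD('d) / lam \<le> measure M {\<omega>\<in>space M. a \<le> f (X \<omega>)}"
proof -
  interpret prob_space M by (rule P)
  define v :: "real^'d" where "v = (\<chi> i. r)"
  define C where "C = cbox (xs - v) (xs + v)"
  have Cm: "C \<in> sets lborel" unfolding C_def by simp
  have inC: "a \<le> f y" if "y \<in> C" for y
  proof -
    have "\<bar>(y - xs)$i\<bar> \<le> r" for i using that by (auto simp: C_def mem_box_cart v_def abs_le_iff dest!: spec[of _ i])
    then have "a \<le> f (xs + (y - xs))" by (rule cube)
    then show ?thesis by simp
  qed
  have bas: "(\<chi> i. c) \<bullet> b = c" if "b \<in> Basis" for b and c :: real
    using that by (auto simp: Basis_vec_def inner_axis)
  have "emeasure lborel C = ennreal (\<Prod>b\<in>Basis. ((xs + v) - (xs - v)) \<bullet> (b::real^'d))"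
    unfolding C_def emeasure_lborel_cbox_eq using r
    by (auto simp: v_def inner_diff_left inner_add_left bas)
  also have "(\<Prod>b\<in>Basis. ((xs + v) - (xs - v)) \<bullet> (b::real^'d)) = (\<Prod>b\<in>(Basis::(real^'d) set). 2*r)"
  proof (intro prod.cong refl)
    fix b :: "real^'d" assume b: "b \<in> Basis"
    have "(xs + v) - (xs - v) = (\<chi> i. 2 * r)" by (simp add: v_def vec_eq_iff)
    then show "((xs + v) - (xs - v)) \<bullet> b = 2 * r" using bas[OF b] by simp
  qed
  also have "\<dots> = (2*r)^CARD('d)" by simp
  finally have vol: "emeasure lborel C = ennreal ((2*r)^CARD('d))" .
  have Xm: "X \<in> measurable M lborel" using dist by (rule distributed_measurable)
  have "ennreal (a / lam) * emeasure lborel C = (\<integral>\<^sup>+x. ennreal (a / lam) * indicator C x \<partial>lborel)"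
    using Cm by (simp add: nn_integral_cmult_indicator)
  also have "\<dots> \<le> (\<integral>\<^sup>+x. ennreal (f x / lam) * indicator C x \<partial>lborel)"
    using lam by (intro nn_integral_mono) (auto split: split_indicator intro!: ennreal_leI divide_right_mono inC)
  also have "\<dots> = emeasure M (X -` C \<inter> space M)"
    by (rule distributed_emeasure[OF dist Cm, symmetric])
  finally have "ennreal (a / lam) * ennreal ((2*r)^CARD('d)) \<le> ennreal (measure M (X -` C \<inter> space M))"
    by (simp only: vol emeasure_eq_measure)
  then have "ennreal (a / lam * (2*r)^CARD('d)) \<le> ennreal (measure M (X -` C \<inter> space M))"
    using a lam r by (subst ennreal_mult) auto
  then have "a / lam * (2*r)^CARD('d) \<le> measure M (X -` C \<inter> space M)"
    by (simp add: ennreal_le_iff)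
  also have "\<dots> \<le> measure M {\<omega>\<in>space M. a \<le> f (X \<omega>)}"
  proof (rule finite_measure_mono)
    show "X -` C \<inter> space M \<subseteq> {\<omega> \<in> space M. a \<le> f (X \<omega>)}" using inC by auto
    have "X \<in> borel_measurable M" using Xm by (simp add: measurable_lborel2)
    then show "{\<omega> \<in> space M. a \<le> f (X \<omega>)} \<in> sets M" using fm by measurable
  qed
  finally show ?thesis by simp
qed


lemma exponent_ident:
  fixes N K \<beta> :: real
  assumes N: "N > 0" and K: "K > 0"
  shows "K powr (- real n / 2) * N powr (1 - real n * \<beta> / 4) = (sqrt (N powr (-\<beta>/2) / K)) ^ n * N"
proof -
  define \<epsilon> where "\<epsilon> = N powr (-\<beta>/2)"
  have e: "\<epsilon> > 0" using N by (simp add: \<epsilon>_def)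
  have "(sqrt (\<epsilon> / K)) ^ n = (sqrt (\<epsilon> / K)) powr real n"
    using e K by (simp add: powr_realpow)
  also have "\<dots> = ((\<epsilon> / K) powr (1/2)) powr real n"
    using e K by (simp add: powr_half_sqrt)
  also have "\<dots> = (\<epsilon> / K) powr (real n / 2)" by (simp add: powr_powr)
  also have "\<dots> = \<epsilon> powr (real n / 2) / K powr (real n / 2)"
    using e K by (simp add: powr_divide)
  also have "\<epsilon> powr (real n / 2) = N powr (-\<beta> * real n / 4)"
    unfolding \<epsilon>_def by (simp add: powr_powr)
  finally have "(sqrt (\<epsilon> / K)) ^ n * N = N powr (-\<beta> * real n / 4) * N / K powr (real n / 2)"
    by simp
  also have "N powr (-\<beta> * real n / 4) * N = N powr (1 - real n * \<beta> / 4)"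
  proof -
    have "N powr (1 - real n * \<beta> / 4) = N powr (-\<beta> * real n / 4) * N powr 1"
      by (subst powr_add[symmetric]) (simp add: algebra_simps)
    then show ?thesis using N by simp
  qed
  finally show ?thesis
    by (simp add: \<epsilon>_def powr_minus_divide)
qed

theorem corollary5p2:
  fixes f :: "real^'d \<Rightarrow> real" and xstar :: "real^'d"
  assumes C2: "C2 f"
    and nonneg: "\<And>x. f x \<ge> 0"
    and max: "\<And>x. f x \<le> f xstar"
    and Kfin: "bdd_above (range (hess_abs_sum f))"
    and integ: "integrable lborel f"
    and lampos: "integral\<^sup>L lborel f > 0"
  shows
    "(\<forall>(M::'b measure) (X :: nat \<Rightarrow> 'b \<Rightarrow> real^'d) (N::nat) (\<beta>::real).
        prob_space M \<longrightarrow>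
        prob_space.indep_vars M (\<lambda>_. borel) X {1..N} \<longrightarrow>
        (\<forall>n\<in>{1..N}. distributed M lborel (X n)
             (\<lambda>x. ennreal (f x / integral\<^sup>L lborel f))) \<longrightarrow>
        0 < \<beta> \<longrightarrow> \<beta> < 4 / real CARD('d) \<longrightarrow>
        real N > f xstar powr (2 / \<beta>) \<longrightarrow>
        integral\<^sup>L M (\<lambda>\<omega>. \<bar>Max ((\<lambda>n. f (X n \<omega>)) ` {1..N}) - f xstar\<bar>\<^sup>2)
          \<le> real N powr (-\<beta>)
             + (f xstar)\<^sup>2 * exp (- (f xstar - real N powr (-\<beta>/2))
                 * Kconst f powr (- real CARD('d) / 2)
                 * real N powr (1 - real CARD('d) * \<beta> / 4)
                 / integral\<^sup>L lborel f))
     \<and>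
     (\<forall>(M::'b measure) (X :: nat \<Rightarrow> 'b \<Rightarrow> real^'d).
        prob_space M \<longrightarrow>
        prob_space.indep_vars M (\<lambda>_. borel) X UNIV \<longrightarrow>
        (\<forall>n. distributed M lborel (X n)
             (\<lambda>x. ennreal (f x / integral\<^sup>L lborel f))) \<longrightarrow>
        (\<lambda>N. integral\<^sup>L M (\<lambda>\<omega>. \<bar>Max ((\<lambda>n. f (X n \<omega>)) ` {1..N}) - f xstar\<bar>\<^sup>2))
          \<longlonglongrightarrow> 0)"
proof -
  define c where "c = f xstar"
  define lam where "lam = integral\<^sup>L lborel f"
  have lam: "lam > 0" using lampos by (simp add: lam_def)
  have fm: "f \<in> borel_measurable borel"
    using C2 unfolding C2_def by (auto intro: borel_measurable_continuous_onI)
  have c0: "c > 0"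
  proof (rule ccontr)
    assume "\<not> c > 0"
    then have "f = (\<lambda>x. 0)" using nonneg max unfolding c_def fun_eq_iff by (smt (verit))
    then show False using lampos by simp
  qed
  have K0: "Kconst f \<ge> 0"
  proof -
    have "0 \<le> hess_abs_sum f 0" unfolding hess_abs_sum_def by (intro sum_nonneg) auto
    also have "\<dots> \<le> (SUP x. hess_abs_sum f x)" using Kfin by (intro cSUP_upper) auto
    finally show ?thesis by (simp add: Kconst_def)
  qed
  have main: "integral\<^sup>L M (\<lambda>\<omega>. \<bar>Max ((\<lambda>n. f (X n \<omega>)) ` {1..N}) - c\<bar>\<^sup>2) \<le> \<epsilon>\<^sup>2 + c\<^sup>2 * (1 - p) ^ N"
    if P: "prob_space M" and ind: "prob_space.indep_vars M (\<lambda>_. borel) X {1..N}"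
      and N: "N \<ge> 1" and e: "\<epsilon> \<ge> 0"
      and p: "\<And>n. n\<in>{1..N} \<Longrightarrow> p \<le> measure M {\<omega>\<in>space M. c - \<epsilon> \<le> f (X n \<omega>)}"
    for M :: "'b measure" and X N \<epsilon> p
    using prob_space.max_bound[OF P ind N fm nonneg _ e p] max by (auto simp: c_def)
  show ?thesis
  proof (intro conjI allI impI)
    fix M :: "'b measure" and X :: "nat \<Rightarrow> 'b \<Rightarrow> real^'d" and N :: nat and \<beta> :: real
    assume P: "prob_space M" and ind: "prob_space.indep_vars M (\<lambda>_. borel) X {1..N}"
      and dist: "\<forall>n\<in>{1..N}. distributed M lborel (X n) (\<lambda>x. ennreal (f x / integral\<^sup>L lborel f))"
      and b0: "0 < \<beta>" and b1: "\<beta> < 4 / real CARD('d)"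
      and Nb: "real N > f xstar powr (2 / \<beta>)"
    interpret prob_space M by (rule P)
    define \<epsilon> where "\<epsilon> = real N powr (-\<beta>/2)"
    define K where "K = Kconst f"
    define E where "E = integral\<^sup>L M (\<lambda>\<omega>. \<bar>Max ((\<lambda>n. f (X n \<omega>)) ` {1..N}) - c\<bar>\<^sup>2)"
    define A where "A = (f xstar - real N powr (-\<beta>/2)) * Kconst f powr (- real CARD('d) / 2)
                 * real N powr (1 - real CARD('d) * \<beta> / 4) / integral\<^sup>L lborel f"
    have N0: "real N > 0" using Nb by (smt (verit) powr_ge_zero)
    have N1: "N \<ge> 1" using N0 by simp
    have e0: "\<epsilon> > 0" using N0 by (simp add: \<epsilon>_def)
    have e2: "\<epsilon>\<^sup>2 = real N powr (-\<beta>)"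
      unfolding \<epsilon>_def using N0 by (simp add: power2_eq_square powr_add[symmetric])
    have goal: "E \<le> real N powr (-\<beta>) + c\<^sup>2 * exp (- A)"
    proof (cases "c - \<epsilon> \<le> 0 \<or> K = 0")
      case True
      have "E \<le> c\<^sup>2 + c\<^sup>2 * (1 - 1) ^ N"
        unfolding E_def
      proof (rule main[OF P ind N1])
        show "0 \<le> c" using c0 by simp
        fix n assume "n \<in> {1..N}"
        have "{\<omega>\<in>space M. c - c \<le> f (X n \<omega>)} = space M" using nonneg by auto
        then show "1 \<le> measure M {\<omega>\<in>space M. c - c \<le> f (X n \<omega>)}" by (simp add: prob_space)
      qed
      then have Ec: "E \<le> c\<^sup>2" using N1 by (simp add: power_0_left)
      have "0 \<le> - A"
        using True
      proof
        assume "c - \<epsilon> \<le> 0"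
        then have "0 \<le> - (c - \<epsilon>)" by simp
        have "A = (c - \<epsilon>) * (Kconst f powr (- real CARD('d) / 2) * real N powr (1 - real CARD('d) * \<beta> / 4)) / lam"
          by (simp add: A_def c_def \<epsilon>_def lam_def mult.assoc)
        moreover have "(c - \<epsilon>) * (Kconst f powr (- real CARD('d) / 2) * real N powr (1 - real CARD('d) * \<beta> / 4)) / lam \<le> 0"
          using \<open>c - \<epsilon> \<le> 0\<close> lam by (intro divide_nonpos_pos mult_nonpos_nonneg) auto
        ultimately show "0 \<le> - A" by simp
      next
        assume "K = 0"
        then show "0 \<le> - A" by (simp add: A_def K_def)
      qed
      then have "1 \<le> exp (- A)" by simp
      then have "c\<^sup>2 * 1 \<le> c\<^sup>2 * exp (- A)" by (intro mult_left_mono) auto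
      then show ?thesis using Ec by (smt (verit) powr_ge_zero)
    next
      case False
      then have ce: "c - \<epsilon> > 0" and K: "K > 0" using K0 by (auto simp: K_def)
      define r where "r = sqrt (\<epsilon> / K)"
      have r0: "r \<ge> 0" using e0 K by (simp add: r_def)
      have Kr: "K * r\<^sup>2 = \<epsilon>" using e0 K by (simp add: r_def)
      have cube: "c - \<epsilon> \<le> f (xstar + h)" if "\<And>i. \<bar>h$i\<bar> \<le> r" for h
        using taylor_lower[OF C2 max Kfin that] Kr by (simp add: c_def K_def)
      define p where "p = (c - \<epsilon>) * (2*r)^CARD('d) / lam"
      have pn: "p \<le> measure M {\<omega>\<in>space M. c - \<epsilon> \<le> f (X n \<omega>)}" if n: "n \<in> {1..N}" for n
        unfolding p_def
        by (rule cube_prob[OF P _ lam r0 _ cube fm]) (use dist n ce in \<open>auto simp: lam_def\<close>)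
      have E1: "E \<le> \<epsilon>\<^sup>2 + c\<^sup>2 * (1 - p) ^ N"
        unfolding E_def by (rule main[OF P ind N1 _ pn]) (use e0 in auto)
      have p1: "p \<le> 1" using pn[of 1] N1 prob_le_1 by (smt (verit) atLeastAtMost_iff order_refl)
      have "(1 - p) ^ N \<le> exp (- p) ^ N"
        using p1 exp_ge_add_one_self[of "-p"] by (intro power_mono) auto
      also have "\<dots> = exp (real N * (- p))" by (rule exp_of_nat_mult[symmetric])
      also have "\<dots> \<le> exp (- A)"
      proof -
        have id: "K powr (- real CARD('d) / 2) * real N powr (1 - real CARD('d) * \<beta> / 4)
                   = r ^ CARD('d) * real N"
          unfolding r_def \<epsilon>_def by (rule exponent_ident[OF N0 K])
        have "r ^ CARD('d) \<le> (2 * r) ^ CARD('d)"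
          using r0 by (intro power_mono) auto
        then have "(c - \<epsilon>) * (r ^ CARD('d) * real N) / lam \<le> (c - \<epsilon>) * ((2 * r) ^ CARD('d) * real N) / lam"
          using ce lam N0 by (intro divide_right_mono mult_left_mono mult_right_mono) auto
        moreover have "A = (c - \<epsilon>) * (K powr (- real CARD('d) / 2) * real N powr (1 - real CARD('d) * \<beta> / 4)) / lam"
          by (simp add: A_def c_def \<epsilon>_def lam_def K_def mult.assoc)
        moreover have "(c - \<epsilon>) * ((2 * r) ^ CARD('d) * real N) / lam = real N * p"
          by (simp add: p_def)
        ultimately have "A \<le> real N * p" by (simp only: id)
        then show ?thesis by simp
      qed
      finally have "c\<^sup>2 * (1 - p) ^ N \<le> c\<^sup>2 * exp (- A)" by (simp add: mult_left_mono)
      then show ?thesis using E1 e2 by simp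
    qed
    have mA: "- A = - (f xstar - real N powr (-\<beta>/2))
                 * Kconst f powr (- real CARD('d) / 2)
                 * real N powr (1 - real CARD('d) * \<beta> / 4)
                 / integral\<^sup>L lborel f" unfolding A_def by (simp only: mult_minus_left minus_divide_left)
    show "integral\<^sup>L M (\<lambda>\<omega>. \<bar>Max ((\<lambda>n. f (X n \<omega>)) ` {1..N}) - f xstar\<bar>\<^sup>2)
          \<le> real N powr (-\<beta>)
             + (f xstar)\<^sup>2 * exp (- (f xstar - real N powr (-\<beta>/2))
                 * Kconst f powr (- real CARD('d) / 2)
                 * real N powr (1 - real CARD('d) * \<beta> / 4)
                 / integral\<^sup>L lborel f)"
      using goal unfolding mA E_def c_def .
  next
    fix M :: "'b measure" and X :: "nat \<Rightarrow> 'b \<Rightarrow> real^'d"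
    assume P: "prob_space M" and ind: "prob_space.indep_vars M (\<lambda>_. borel) X UNIV"
      and dist: "\<forall>n. distributed M lborel (X n) (\<lambda>x. ennreal (f x / integral\<^sup>L lborel f))"
    interpret prob_space M by (rule P)
    define E where "E = (\<lambda>N. integral\<^sup>L M (\<lambda>\<omega>. \<bar>Max ((\<lambda>n. f (X n \<omega>)) ` {1..N}) - f xstar\<bar>\<^sup>2))"
    have E0: "E N \<ge> 0" for N by (simp add: E_def)
    have "E \<longlonglongrightarrow> 0"
    proof (rule LIMSEQ_I)
      fix e :: real assume e: "e > 0"
      define \<epsilon> where "\<epsilon> = min (c/2) (sqrt (e/2))"
      have e0: "\<epsilon> > 0" using e c0 by (simp add: \<epsilon>_def)
      have ce: "c - \<epsilon> > 0" using c0 by (simp add: \<epsilon>_def)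
      have e2: "\<epsilon>\<^sup>2 \<le> e/2"
      proof -
        have "\<epsilon>\<^sup>2 \<le> (sqrt (e/2))\<^sup>2" using e0 by (intro power_mono) (auto simp: \<epsilon>_def)
        then show ?thesis using e by simp
      qed
      have "continuous_on UNIV f" using C2 unfolding C2_def by auto
      then obtain \<delta> where \<delta>: "\<delta> > 0" "\<And>y. dist y xstar < \<delta> \<Longrightarrow> dist (f y) (f xstar) < \<epsilon>"
        unfolding continuous_on_iff using e0 by blast
      define r where "r = \<delta> / (2 * real CARD('d))"
      have r0: "r > 0" using \<delta> by (simp add: r_def)
      have cube: "c - \<epsilon> \<le> f (xstar + h)" if hr: "\<And>i. \<bar>h$i\<bar> \<le> r" for h
      proof -
        have "norm h \<le> (\<Sum>i\<in>UNIV. \<bar>h$i\<bar>)" by (rule norm_le_l1_cart)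
        also have "\<dots> \<le> (\<Sum>i\<in>(UNIV::'d set). r)" using hr by (intro sum_mono) auto
        also have "\<dots> = \<delta> / 2" by (simp add: r_def)
        also have "\<dots> < \<delta>" using \<delta> by simp
        finally have "dist (xstar + h) xstar < \<delta>" by (simp add: dist_norm)
        then have "dist (f (xstar + h)) (f xstar) < \<epsilon>" by (rule \<delta>(2))
        then show ?thesis by (simp add: c_def dist_real_def)
      qed
      define p where "p = (c - \<epsilon>) * (2*r)^CARD('d) / lam"
      have p0: "p > 0" using ce r0 lam by (simp add: p_def)
      have pn: "p \<le> measure M {\<omega>\<in>space M. c - \<epsilon> \<le> f (X n \<omega>)}" for n
        unfolding p_def
        by (rule cube_prob[OF P _ lam _ _ cube fm]) (use dist r0 ce in \<open>auto simp: lam_def\<close>)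
      have p1: "p \<le> 1" using pn[of 0] prob_le_1 by (rule order_trans)
      have "(\<lambda>N. c\<^sup>2 * (1 - p) ^ N) \<longlonglongrightarrow> c\<^sup>2 * 0"
        using p0 p1 by (intro tendsto_intros) auto
      then obtain N0 where N0: "\<And>N. N \<ge> N0 \<Longrightarrow> norm (c\<^sup>2 * (1 - p) ^ N - 0) < e/2"
        using e by (metis LIMSEQ_D half_gt_zero mult_zero_right)
      show "\<exists>no. \<forall>n\<ge>no. norm (E n - 0) < e"
      proof (intro exI allI impI)
        fix N assume N: "max N0 1 \<le> N"
        have ind': "indep_vars (\<lambda>_. borel) X {1..N}" using ind by (rule indep_vars_subset) auto
        have "E N \<le> \<epsilon>\<^sup>2 + c\<^sup>2 * (1 - p) ^ N"
          unfolding E_def c_def[symmetric]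
          by (rule main[OF P ind' _ _ pn]) (use N e0 in auto)
        moreover have "c\<^sup>2 * (1 - p) ^ N < e/2" using N0[of N] N by simp
        ultimately show "norm (E N - 0) < e" using E0[of N] e2 by simp
      qed
    qed
    then show "(\<lambda>N. integral\<^sup>L M (\<lambda>\<omega>. \<bar>Max ((\<lambda>n. f (X n \<omega>)) ` {1..N}) - f xstar\<bar>\<^sup>2)) \<longlonglongrightarrow> 0"
      by (simp add: E_def)
  qed
qed


end
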